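(* Let $\Lambda_1\geq 0$ and $\Lambda_2>1$. Let $F(z)=\bar{z}G(z)+H(z)$, $z\in\mathbb{D}=\{z:|z|<1\}$, where $G$ and $H$ are analytic in $\mathbb{D}$ with $G(0)=0$, $H(0)=0$, $H'(0)=1$, $|G'(z)|\leq \Lambda_1$ and $|H'(z)|<\Lambda_2$ for all $z\in\mathbb{D}$. Set $$\rho_1=\frac{2\Lambda_2}{\Lambda_2(2\Lambda_1+\Lambda_2)+\sqrt{\Lambda_2^2(2\Lambda_1+\Lambda_2)^2-8\Lambda_1\Lambda_2}},$$ $$F_1(z)=\Lambda_2^2 z-\Lambda_1|z|^2+(\Lambda_2^3-\Lambda_2)\ln\Big(1-\frac{z}{\Lambda_2}\Big),\qquad \sigma_1=F_1(\rho_1)=\Lambda_2^2\rho_1-\Lambda_1\rho_1^2+(\Lambda_2^3-\Lambda_2)\ln\Big(1-\frac{\rho_1}{\Lambda_2}\Big).$$ Then $F$ is univalent in $\mathbb{D}_{\rho_1}$ and $F(\mathbb{D}_{\rho_1})\supseteq\mathbb{D}_{\sigma_1}$. This result is sharp: the function $F_1$ (principal branch of the logarithm) satisfies the hypotheses, is not univalent in $\mathbb{D}_r$ for any $r\in(\rho_1,1]$, and $|F_1(\rho_1)|=\sigma_1$ with $\rho_1\in\partial\mathbb{D}_{\rho_1}$.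
   Context: $\mathbb{D}_r=\{z\in\mathbb{C}:|z|<r\}$. A function of the form $\bar z G(z)+H(z)$ with $G,H$ analytic is called bi-analytic (it satisfies $F_{\bar z\bar z}=0$). *)

theory Defs
  imports "HOL-Analysis.Analysis"
begin

definition rho1 :: "real \<Rightarrow> real \<Rightarrow> real" where
  "rho1 L1 L2 = 2 * L2 /
     (L2 * (2 * L1 + L2) + sqrt (L2\<^sup>2 * (2 * L1 + L2)\<^sup>2 - 8 * L1 * L2))"

definition F1 :: "real \<Rightarrow> real \<Rightarrow> complex \<Rightarrow> complex" where
  "F1 L1 L2 z = of_real (L2\<^sup>2) * z - of_real L1 * of_real ((cmod z)\<^sup>2)
     + of_real (L2 ^ 3 - L2) * Ln (1 - z / of_real L2)"

definition sigma1 :: "real \<Rightarrow> real \<Rightarrow> real" where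
  "sigma1 L1 L2 = L2\<^sup>2 * rho1 L1 L2 - L1 * (rho1 L1 L2)\<^sup>2
     + (L2 ^ 3 - L2) * ln (1 - rho1 L1 L2 / L2)"

end

theory Submission
  imports Defs "HOL-Complex_Analysis.Complex_Analysis"
begin


definition qq :: "real \<Rightarrow> real \<Rightarrow> real \<Rightarrow> real" where
  "qq L1 L2 x = 2*L1*x^2 - L2*(2*L1+L2)*x + L2"

lemma rho1_props:
  assumes "L1 \<ge> 0" "L2 > 1"
  shows "0 < rho1 L1 L2" "rho1 L1 L2 < 1" "qq L1 L2 (rho1 L1 L2) = 0"
proof -
  define A where "A = L2*(2*L1+L2)"
  define D where "D = L2\<^sup>2 * (2 * L1 + L2)\<^sup>2 - 8 * L1 * L2"
  define S where "S = sqrt D"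
  have DA: "D = (A-2)^2 + 4*L2^2 - 4" unfolding D_def A_def by (simp add: power2_eq_square algebra_simps)
  have "L2^2 > 1" using assms by (simp add: one_less_power)
  hence Dp: "D > 0" using DA by (smt (verit) zero_le_power2)
  have Sp: "S > 0" using Dp S_def by simp
  have SS: "S^2 = D" using Dp S_def by simp
  have Ap: "A > 0" using assms A_def by simp
  have r: "rho1 L1 L2 = 2*L2/(A+S)" unfolding rho1_def A_def S_def D_def by simp
  show "0 < rho1 L1 L2" using r Ap Sp assms by simp
  have key: "(A - 2*L1 - L2) > 0"
  proof -
    have "A - 2*L1 - L2 = (L2-1)*(2*L1+L2)" unfolding A_def by (simp add: algebra_simps)
    thus ?thesis using assms by simp
  qed
  have "2*L2 < A + S"
  proof (cases "2*L2 - A \<le> 0")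
    case True thus ?thesis using Sp by linarith
  next
    case False
    have "(2*L2-A)^2 < S^2" unfolding SS DA using key assms
      by (simp add: power2_eq_square algebra_simps)
    hence "2*L2 - A < S" using Sp by (smt (verit) power_mono)
    thus ?thesis by linarith
  qed
  thus "rho1 L1 L2 < 1" using r Ap Sp by simp
  define X where "X = A + S"
  have Xp: "X > 0" using Ap Sp X_def by simp
  have qa: "qq L1 L2 x = 2*L1*x^2 - A*x + L2" for x unfolding qq_def A_def by simp
  have "qq L1 L2 (rho1 L1 L2) * X^2 = 8*L1*L2^2 - 2*A*L2*X + L2*X^2"
    unfolding r qa X_def[symmetric] using Xp
    by (simp add: field_simps power2_eq_square)
  also have "\<dots> = L2 * (8*L1*L2 - A^2 + S^2)" unfolding X_def by (simp add: power2_eq_square algebra_simps)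
  also have "\<dots> = 0" unfolding SS D_def A_def by (simp add: power2_eq_square algebra_simps)
  finally show "qq L1 L2 (rho1 L1 L2) = 0" using Xp by simp
qed

lemma qq_sign:
  assumes "L1 \<ge> 0" "L2 > 1"
  shows "0 \<le> x \<Longrightarrow> x < rho1 L1 L2 \<Longrightarrow> qq L1 L2 x > 0"
    and "rho1 L1 L2 < x \<Longrightarrow> x \<le> 1 \<Longrightarrow> qq L1 L2 x < 0"
proof -
  define r where "r = rho1 L1 L2"
  note rp = rho1_props[OF assms, folded r_def]
  have fact: "qq L1 L2 y = (y - r)*(2*L1*(y+r) - L2*(2*L1+L2))" for y
    using rp(3) unfolding qq_def by (simp add: power2_eq_square algebra_simps)
  have q1: "qq L1 L2 1 < 0"
  proof -
    have "L2 < L2*L2" using assms by simp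
    moreover have "L1*2 \<le> L1*(L2*2)" using assms by (simp add: mult_left_mono)
    ultimately show ?thesis unfolding qq_def by (simp add: power2_eq_square algebra_simps)
  qed
  have neg: "2*L1*(1+r) - L2*(2*L1+L2) < 0"
    using q1 fact[of 1] rp by (simp add: mult_less_0_iff)
  have negy: "2*L1*(y+r) - L2*(2*L1+L2) < 0" if "y \<le> 1" for y
  proof -
    have "2*L1*(y+r) \<le> 2*L1*(1+r)" using that assms by (simp add: mult_left_mono)
    thus ?thesis using neg by linarith
  qed
  show "0 \<le> x \<Longrightarrow> x < rho1 L1 L2 \<Longrightarrow> qq L1 L2 x > 0"
    using fact[of x] negy[of x] rp unfolding r_def[symmetric] by (simp add: mult_neg_neg)
  show "rho1 L1 L2 < x \<Longrightarrow> x \<le> 1 \<Longrightarrow> qq L1 L2 x < 0"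
    using fact[of x] negy[of x] unfolding r_def[symmetric] by (simp add: mult_pos_neg)
qed


definition fr :: "real \<Rightarrow> real \<Rightarrow> real \<Rightarrow> real" where
  "fr L1 L2 x = L2\<^sup>2 * x - L1 * x\<^sup>2 + (L2 ^ 3 - L2) * ln (1 - x / L2)"

definition BB :: "real \<Rightarrow> real \<Rightarrow> real \<Rightarrow> real" where
  "BB L1 L2 t = 2*L1*t + (L2\<^sup>2 - 1)*t/(L2 - t)"

lemma fr_deriv:
  assumes "L2 > 1" "x < L2"
  shows "(fr L1 L2 has_real_derivative (1 - BB L1 L2 x)) (at x)"
proof -
  have pos: "1 - x/L2 > 0" using assms by (simp add: field_simps)
  have "L2 \<noteq> 0" using assms by simp
  have "(fr L1 L2 has_real_derivative
      (L2\<^sup>2 - L1 * (2*x) + (L2^3 - L2) * ((- (1/L2)) / (1 - x/L2)))) (at x)"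
    unfolding fr_def using pos \<open>L2 \<noteq> 0\<close>
    by (auto intro!: derivative_eq_intros simp: power2_eq_square)
  moreover have "L2\<^sup>2 - L1 * (2*x) + (L2^3 - L2) * ((- (1/L2)) / (1 - x/L2)) = 1 - BB L1 L2 x"
  proof -
    have nz: "L2 - x \<noteq> 0" using assms by simp
    have e1: "(L2^3 - L2) * ((- (1/L2)) / (1 - x/L2)) = - ((L2\<^sup>2 - 1) * L2 / (L2 - x))"
      using nz \<open>L2 \<noteq> 0\<close> by (simp add: field_simps power2_eq_square power3_eq_cube)
    have e2: "(L2\<^sup>2 - 1) * L2 / (L2 - x) = (L2\<^sup>2 - 1) + (L2\<^sup>2 - 1) * x / (L2 - x)"
      using nz by (simp add: field_simps)
    show ?thesis unfolding BB_def e1 e2 by simp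
  qed
  ultimately show ?thesis by simp
qed

lemma BB_qq: "L2 > 1 \<Longrightarrow> t < L2 \<Longrightarrow> 1 - BB L1 L2 t = qq L1 L2 t / (L2 - t)"
  unfolding BB_def qq_def by (simp add: field_simps power2_eq_square)

lemma BB_mono: assumes "L1 \<ge> 0" "L2 > 1" "0 \<le> s" "s \<le> t" "t < L2"
  shows "BB L1 L2 s \<le> BB L1 L2 t"
proof -
  have "s/(L2-s) \<le> t/(L2-t)" using assms by (simp add: frac_le)
  moreover have "1 \<le> L2\<^sup>2" using assms by (simp add: one_le_power)
  ultimately have "(L2\<^sup>2 - 1)*(s/(L2-s)) \<le> (L2\<^sup>2 - 1)*(t/(L2-t))"
    by (intro mult_left_mono) auto
  moreover have "L1 * s \<le> L1 * t" using assms by (simp add: mult_left_mono)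
  ultimately show ?thesis unfolding BB_def by simp
qed

lemma fr0: "fr L1 L2 0 = 0" unfolding fr_def by simp

lemma fr_incr:
  assumes "L1 \<ge> 0" "L2 > 1" "0 \<le> a" "a < b" "b \<le> rho1 L1 L2"
  shows "fr L1 L2 a < fr L1 L2 b"
proof -
  note rp = rho1_props[OF assms(1,2)]
  have "\<And>x. a \<le> x \<Longrightarrow> x \<le> b \<Longrightarrow> (fr L1 L2 has_real_derivative (1 - BB L1 L2 x)) (at x)"
    using fr_deriv assms rp by auto
  then obtain z where z: "a < z" "z < b" "fr L1 L2 b - fr L1 L2 a = (b - a) * (1 - BB L1 L2 z)"
    using MVT2[OF assms(4), of "fr L1 L2" "\<lambda>x. 1 - BB L1 L2 x"] by blast
  have "qq L1 L2 z > 0" using qq_sign(1)[OF assms(1,2)] z assms by auto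
  hence "1 - BB L1 L2 z > 0" using BB_qq[of L2 z L1] z assms rp by simp
  moreover have "b - a > 0" using assms by simp
  ultimately have "(b - a) * (1 - BB L1 L2 z) > 0" by (rule mult_pos_pos[rotated])
  thus ?thesis using z by simp
qed

lemma fr_decr:
  assumes "L1 \<ge> 0" "L2 > 1" "rho1 L1 L2 \<le> a" "a < b" "b \<le> 1"
  shows "fr L1 L2 b < fr L1 L2 a"
proof -
  note rp = rho1_props[OF assms(1,2)]
  have "\<And>x. a \<le> x \<Longrightarrow> x \<le> b \<Longrightarrow> (fr L1 L2 has_real_derivative (1 - BB L1 L2 x)) (at x)"
    using fr_deriv assms rp by auto
  then obtain z where z: "a < z" "z < b" "fr L1 L2 b - fr L1 L2 a = (b - a) * (1 - BB L1 L2 z)"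
    using MVT2[OF assms(4), of "fr L1 L2" "\<lambda>x. 1 - BB L1 L2 x"] by blast
  have "qq L1 L2 z < 0" using qq_sign(2)[OF assms(1,2)] z assms by auto
  hence "1 - BB L1 L2 z < 0" using BB_qq[of L2 z L1] z assms rp
    by (simp add: divide_less_0_iff)
  moreover have "b - a > 0" using assms by simp
  ultimately have "(b - a) * (1 - BB L1 L2 z) < 0" by (simp add: mult_pos_neg)
  thus ?thesis using z by simp
qed

lemma sigma1_fr: "sigma1 L1 L2 = fr L1 L2 (rho1 L1 L2)"
  unfolding sigma1_def fr_def by simp

lemma F1_real:
  assumes "L2 > 1" "x < L2"
  shows "F1 L1 L2 (complex_of_real x) = complex_of_real (fr L1 L2 x)"
proof -
  have pos: "1 - x/L2 > 0" using assms by (simp add: field_simps)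
  have "1 - complex_of_real x / complex_of_real L2 = complex_of_real (1 - x/L2)" by simp
  moreover have "Ln (complex_of_real (1 - x/L2)) = complex_of_real (ln (1 - x/L2))"
    by (rule Ln_of_real[OF pos])
  ultimately have "Ln (1 - complex_of_real x / complex_of_real L2) = complex_of_real (ln (1 - x/L2))"
    by simp
  thus ?thesis unfolding F1_def fr_def by (simp add: power2_eq_square)
qed



lemma G_bound:
  assumes "G analytic_on ball 0 1" "G 0 = 0" "\<forall>z\<in>ball 0 1. cmod (deriv G z) \<le> L1"
    and "z \<in> ball 0 1"
  shows "cmod (G z) \<le> L1 * cmod z"
proof -
  have hol: "G holomorphic_on ball 0 1" using assms(1) by (simp add: analytic_imp_holomorphic)
  have "cmod (G z - G 0) \<le> L1 * cmod (z - 0)"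
    by (rule field_differentiable_bound[of "ball 0 1" G "deriv G"])
       (use assms hol in \<open>auto intro: holomorphic_derivI\<close>)
  thus ?thesis using assms(2) by simp
qed

lemma disk_ineq:
  fixes w :: complex
  assumes "L2 > 1" "cmod w < L2"
  shows "L2 * cmod (w - 1) < cmod (of_real (L2\<^sup>2) - w)"
proof -
  define x where "x = Re w"
  define y where "y = Im w"
  have n1: "(cmod (w - 1))\<^sup>2 = (x-1)\<^sup>2 + y\<^sup>2" unfolding x_def y_def by (simp add: cmod_power2)
  have n2: "(cmod (of_real (L2\<^sup>2) - w))\<^sup>2 = (L2\<^sup>2 - x)\<^sup>2 + y\<^sup>2" unfolding x_def y_def
    by (simp add: cmod_power2)
  have "(cmod w)\<^sup>2 < L2\<^sup>2" using assms by (simp add: power_strict_mono)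
  hence xy: "x\<^sup>2 + y\<^sup>2 < L2\<^sup>2" unfolding x_def y_def by (simp add: cmod_power2)
  have "L2\<^sup>2 > 1" using assms by (simp add: one_less_power)
  hence pp: "(L2\<^sup>2 - 1) * (L2\<^sup>2 - (x\<^sup>2 + y\<^sup>2)) > 0" using xy by simp
  have id: "((L2\<^sup>2 - x)\<^sup>2 + y\<^sup>2) - L2\<^sup>2 * ((x-1)\<^sup>2 + y\<^sup>2) = (L2\<^sup>2 - 1) * (L2\<^sup>2 - (x\<^sup>2 + y\<^sup>2))"
    by (simp add: power2_eq_square algebra_simps)
  have "(L2 * cmod (w - 1))\<^sup>2 < (cmod (of_real (L2\<^sup>2) - w))\<^sup>2"
    unfolding power_mult_distrib n1 n2 using id pp by linarith
  thus ?thesis by (rule power_less_imp_less_base) simp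
qed

lemma H_bound:
  assumes "L2 > 1" "H analytic_on ball 0 1" "deriv H 0 = 1"
    and "\<forall>z\<in>ball 0 1. cmod (deriv H z) < L2"
    and z: "cmod z < 1"
  shows "cmod (deriv H z - 1) * (L2 - cmod z) \<le> cmod z * (L2\<^sup>2 - 1)"
proof -
  have hol: "H holomorphic_on ball 0 1" using assms(2) by (simp add: analytic_imp_holomorphic)
  have hol': "deriv H holomorphic_on ball 0 1" by (rule holomorphic_deriv[OF hol]) simp
  have L2sq: "L2 < L2\<^sup>2" using assms(1) by (simp add: power2_eq_square)
  have den: "cmod (of_real (L2\<^sup>2) - deriv H u) > 0" if "cmod u < 1" for u
  proof -
    have "cmod (deriv H u) < L2" using assms(4) that by simp
    moreover have "cmod (of_real (L2\<^sup>2) :: complex) = L2\<^sup>2" by (simp only: norm_of_real) simp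
    moreover have "cmod (of_real (L2\<^sup>2) :: complex) - cmod (deriv H u) \<le> cmod (of_real (L2\<^sup>2) - deriv H u)"
      by (rule norm_triangle_ineq2)
    ultimately show ?thesis using L2sq by linarith
  qed
  define g where "g u = of_real L2 * (deriv H u - 1) / (of_real (L2\<^sup>2) - deriv H u)" for u
  have gh: "g holomorphic_on ball 0 1" unfolding g_def
    using hol' den by (auto intro!: holomorphic_intros)
  have g0: "g 0 = 0" unfolding g_def using assms(3) by simp
  have gl: "cmod (g u) < 1" if "cmod u < 1" for u
  proof -
    have "L2 * cmod (deriv H u - 1) < cmod (of_real (L2\<^sup>2) - deriv H u)"
      using disk_ineq[OF assms(1)] assms(4) that by simp
    thus ?thesis unfolding g_def using den[OF that] assms(1)
      by (simp add: norm_divide norm_mult divide_less_eq abs_of_pos)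
  qed
  have "cmod (g z) \<le> cmod z" by (rule Schwarz_Lemma(1)[OF gh g0 gl z])
  hence "L2 * cmod (deriv H z - 1) \<le> cmod z * cmod (of_real (L2\<^sup>2) - deriv H z)"
    unfolding g_def using den[OF z] assms(1)
    by (simp add: norm_divide norm_mult divide_le_eq abs_of_pos)
  also have "cmod (of_real (L2\<^sup>2) - deriv H z) \<le> (L2\<^sup>2 - 1) + cmod (deriv H z - 1)"
  proof -
    have "of_real (L2\<^sup>2) - deriv H z = of_real (L2\<^sup>2 - 1) - (deriv H z - 1)" by simp
    hence "cmod (of_real (L2\<^sup>2) - deriv H z) \<le> cmod (of_real (L2\<^sup>2 - 1) :: complex) + cmod (deriv H z - 1)"
      by (metis norm_triangle_ineq4)
    moreover have "L2\<^sup>2 - 1 \<ge> 0" using L2sq assms(1) by simp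
    hence "cmod (of_real (L2\<^sup>2 - 1) :: complex) = L2\<^sup>2 - 1" by (simp only: norm_of_real)
    ultimately show ?thesis by linarith
  qed
  hence "cmod z * cmod (of_real (L2\<^sup>2) - deriv H z) \<le> cmod z * ((L2\<^sup>2 - 1) + cmod (deriv H z - 1))"
    by (simp add: mult_left_mono)
  finally show ?thesis by (simp add: algebra_simps)
qed

lemma H_bound':
  assumes "L2 > 1" "H analytic_on ball 0 1" "deriv H 0 = 1"
    and "\<forall>z\<in>ball 0 1. cmod (deriv H z) < L2"
    and z: "cmod z < 1"
  shows "cmod (deriv H z - 1) \<le> (L2\<^sup>2 - 1) * cmod z / (L2 - cmod z)"
  using H_bound[OF assms] assms(1) z by (simp add: field_simps)

lemma k_vderiv:
  assumes "G analytic_on ball 0 1" "H analytic_on ball 0 1"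
    and p: "z0 + of_real t * w \<in> ball 0 1"
  shows "((\<lambda>s. cnj (z0 + of_real s * w) * G (z0 + of_real s * w) + (H (z0 + of_real s * w) - (z0 + of_real s * w)))
     has_vector_derivative
      (cnj w * G (z0 + of_real t * w) + cnj (z0 + of_real t * w) * (deriv G (z0 + of_real t * w) * w)
        + (deriv H (z0 + of_real t * w) - 1) * w)) (at t)"
proof -
  define p where "p = z0 + of_real t * w"
  define \<gamma> where "\<gamma> s = z0 + of_real s * w" for s :: real
  have holG: "G holomorphic_on ball 0 1" using assms(1) by (simp add: analytic_imp_holomorphic)
  have holH: "H holomorphic_on ball 0 1" using assms(2) by (simp add: analytic_imp_holomorphic)
  have pin: "p \<in> ball 0 1" using p p_def by simp
  have dg: "(\<gamma> has_vector_derivative w) (at t)"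
  proof -
    have "((\<lambda>z. z0 + z * w) has_field_derivative w) (at (of_real t))"
      by (auto intro!: derivative_eq_intros)
    thus ?thesis unfolding \<gamma>_def by (rule has_vector_derivative_real_field)
  qed
  have gt: "\<gamma> t = p" unfolding \<gamma>_def p_def by simp
  have dG: "((G \<circ> \<gamma>) has_vector_derivative (w * deriv G p)) (at t)"
    by (rule field_vector_diff_chain_at[OF dg]) (use holomorphic_derivI[OF holG _ pin] gt in auto)
  have dH: "((H \<circ> \<gamma>) has_vector_derivative (w * deriv H p)) (at t)"
    by (rule field_vector_diff_chain_at[OF dg]) (use holomorphic_derivI[OF holH _ pin] gt in auto)
  have dc: "((\<lambda>s. cnj (\<gamma> s)) has_vector_derivative cnj w) (at t)"
    by (rule has_vector_derivative_cnj[OF dg])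
  have d1: "((\<lambda>s. cnj (\<gamma> s) * (G \<circ> \<gamma>) s) has_vector_derivative (cnj (\<gamma> t) * (w * deriv G p) + cnj w * (G \<circ> \<gamma>) t)) (at t)"
    by (rule has_vector_derivative_mult[OF dc dG])
  have d2: "((\<lambda>s. (H \<circ> \<gamma>) s - \<gamma> s) has_vector_derivative (w * deriv H p - w)) (at t)"
    by (rule has_vector_derivative_diff[OF dH dg])
  have eqf: "(\<lambda>s. cnj (z0 + of_real s * w) * G (z0 + of_real s * w) + (H (z0 + of_real s * w) - (z0 + of_real s * w)))
     = (\<lambda>s. cnj (\<gamma> s) * (G \<circ> \<gamma>) s + ((H \<circ> \<gamma>) s - \<gamma> s))" by (simp add: \<gamma>_def fun_eq_iff)
  have eqd: "cnj w * G p + cnj p * (deriv G p * w) + (deriv H p - 1) * w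
     = cnj (\<gamma> t) * (w * deriv G p) + cnj w * (G \<circ> \<gamma>) t + (w * deriv H p - w)"
    by (simp add: gt algebra_simps)
  show ?thesis unfolding eqf p_def[symmetric] eqd by (rule has_vector_derivative_add[OF d1 d2])
qed



definition kk :: "(complex \<Rightarrow> complex) \<Rightarrow> (complex \<Rightarrow> complex) \<Rightarrow> complex \<Rightarrow> complex" where
  "kk G H z = cnj z * G z + (H z - z)"

lemma kk_vderiv:
  assumes "G analytic_on ball 0 1" "H analytic_on ball 0 1"
    and p: "z0 + of_real t * w \<in> ball 0 1"
  shows "((\<lambda>s. kk G H (z0 + of_real s * w)) has_vector_derivative
      (cnj w * G (z0 + of_real t * w) + cnj (z0 + of_real t * w) * (deriv G (z0 + of_real t * w) * w)
        + (deriv H (z0 + of_real t * w) - 1) * w)) (at t)"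
  unfolding kk_def by (rule k_vderiv[OF assms])

lemma kk_dbound:
  assumes "L1 \<ge> 0" "L2 > 1" "G analytic_on ball 0 1" "H analytic_on ball 0 1"
    and "G 0 = 0" "deriv H 0 = 1"
    and "\<forall>z\<in>ball 0 1. cmod (deriv G z) \<le> L1"
    and "\<forall>z\<in>ball 0 1. cmod (deriv H z) < L2"
    and p: "p \<in> ball 0 1"
  shows "cmod (cnj w * G p + cnj p * (deriv G p * w) + (deriv H p - 1) * w) \<le> cmod w * BB L1 L2 (cmod p)"
proof -
  have pn: "cmod p < 1" using p by simp
  have g: "cmod (G p) \<le> L1 * cmod p" by (rule G_bound[OF assms(3,5,7) p])
  have g': "cmod (deriv G p) \<le> L1" using assms(7) p by simp
  have h: "cmod (deriv H p - 1) \<le> (L2\<^sup>2 - 1) * cmod p / (L2 - cmod p)"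
    by (rule H_bound'[OF assms(2,4,6,8) pn])
  have "cmod (cnj w * G p + cnj p * (deriv G p * w) + (deriv H p - 1) * w)
      \<le> cmod w * cmod (G p) + cmod p * (cmod (deriv G p) * cmod w) + cmod (deriv H p - 1) * cmod w"
    by (metis norm_triangle_le norm_triangle_ineq add_mono norm_mult complex_mod_cnj order_refl)
  also have "\<dots> \<le> cmod w * (L1 * cmod p) + cmod p * (L1 * cmod w) + ((L2\<^sup>2 - 1) * cmod p / (L2 - cmod p)) * cmod w"
    by (intro add_mono mult_left_mono mult_right_mono g g' h) auto
  also have "\<dots> = cmod w * BB L1 L2 (cmod p)" unfolding BB_def by (simp add: algebra_simps)
  finally show ?thesis .
qed

lemma kk_seg_bound:
  assumes "L1 \<ge> 0" "L2 > 1" "G analytic_on ball 0 1" "H analytic_on ball 0 1"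
    and "G 0 = 0" "deriv H 0 = 1"
    and "\<forall>z\<in>ball 0 1. cmod (deriv G z) \<le> L1"
    and "\<forall>z\<in>ball 0 1. cmod (deriv H z) < L2"
    and r: "0 \<le> r" "r < 1" and z1: "cmod z1 \<le> r" and z2: "cmod z2 \<le> r"
  shows "cmod (kk G H z2 - kk G H z1) \<le> cmod (z2 - z1) * BB L1 L2 r"
proof -
  define w where "w = z2 - z1"
  define f where "f s = kk G H (z1 + of_real s * w)" for s :: real
  have pin: "cmod (z1 + of_real t * w) \<le> r" if "0 \<le> t" "t \<le> 1" for t
  proof -
    have "z1 + of_real t * w = of_real (1-t) * z1 + of_real t * z2" unfolding w_def
      by (simp add: algebra_simps)
    hence "cmod (z1 + of_real t * w) \<le> (1-t) * cmod z1 + t * cmod z2"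
      using that by (metis norm_triangle_ineq norm_mult norm_of_real abs_of_nonneg diff_ge_0_iff_ge)
    also have "\<dots> \<le> r" using that z1 z2 by (intro convex_bound_le) auto
    finally show ?thesis .
  qed
  have fd: "(f has_vector_derivative
      (cnj w * G (z1 + of_real t * w) + cnj (z1 + of_real t * w) * (deriv G (z1 + of_real t * w) * w)
        + (deriv H (z1 + of_real t * w) - 1) * w)) (at t)" if "0 \<le> t" "t \<le> 1" for t
    unfolding f_def using pin[OF that] r by (intro kk_vderiv assms) auto
  have fc: "continuous_on {0..1} f"
    using fd by (intro continuous_at_imp_continuous_on ballI)
       (auto simp: has_vector_derivative_def dest!: has_derivative_continuous)
  have "cmod (f 1 - f 0) \<le> (1 * (cmod w * BB L1 L2 r)) - (0 * (cmod w * BB L1 L2 r))"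
  proof (rule differentiable_bound_general[of 0 1 f "\<lambda>s. s * (cmod w * BB L1 L2 r)"])
    show "continuous_on {0..1} (\<lambda>s. s * (cmod w * BB L1 L2 r))" by (intro continuous_intros)
    fix x :: real assume x: "0 < x" "x < 1"
    show "(f has_vector_derivative
      (cnj w * G (z1 + of_real x * w) + cnj (z1 + of_real x * w) * (deriv G (z1 + of_real x * w) * w)
        + (deriv H (z1 + of_real x * w) - 1) * w)) (at x)" using fd x by simp
    show "((\<lambda>s. s * (cmod w * BB L1 L2 r)) has_vector_derivative (cmod w * BB L1 L2 r)) (at x)"
      by (auto intro!: derivative_eq_intros simp: has_real_derivative_iff_has_vector_derivative[symmetric])
    have pb: "cmod (z1 + of_real x * w) \<le> r" using pin x by simp
    hence "cmod (cnj w * G (z1 + of_real x * w) + cnj (z1 + of_real x * w) * (deriv G (z1 + of_real x * w) * w)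
        + (deriv H (z1 + of_real x * w) - 1) * w) \<le> cmod w * BB L1 L2 (cmod (z1 + of_real x * w))"
      using r by (intro kk_dbound assms) auto
    also have "\<dots> \<le> cmod w * BB L1 L2 r"
      using pb r assms by (intro mult_left_mono BB_mono) auto
    finally show "cmod (cnj w * G (z1 + of_real x * w) + cnj (z1 + of_real x * w) * (deriv G (z1 + of_real x * w) * w)
        + (deriv H (z1 + of_real x * w) - 1) * w) \<le> cmod w * BB L1 L2 r" .
  qed (use fc in auto)
  thus ?thesis unfolding f_def w_def by simp
qed

lemma kk_radial_bound:
  assumes "L1 \<ge> 0" "L2 > 1" "G analytic_on ball 0 1" "H analytic_on ball 0 1"
    and "G 0 = 0" "H 0 = 0" "deriv H 0 = 1"
    and "\<forall>z\<in>ball 0 1. cmod (deriv G z) \<le> L1"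
    and "\<forall>z\<in>ball 0 1. cmod (deriv H z) < L2"
    and z: "cmod z < 1"
  shows "cmod (kk G H z) \<le> cmod z - fr L1 L2 (cmod z)"
proof (cases "z = 0")
  case True thus ?thesis using assms by (simp add: kk_def fr0)
next
  case False
  define r where "r = cmod z"
  have rp: "r > 0" "r < 1" using False z r_def by auto
  define u where "u = z / of_real r"
  have un: "cmod u = 1" using rp u_def r_def False by (simp add: norm_divide)
  have zu: "z = 0 + of_real r * u" using rp u_def by simp
  define f where "f s = kk G H (0 + of_real s * u)" for s :: real
  have pin: "cmod (0 + of_real t * u) = t" if "0 \<le> t" for t using that un by (simp add: norm_mult)
  have fd: "(f has_vector_derivative
      (cnj u * G (0 + of_real t * u) + cnj (0 + of_real t * u) * (deriv G (0 + of_real t * u) * u)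
        + (deriv H (0 + of_real t * u) - 1) * u)) (at t)" if "0 \<le> t" "t \<le> r" for t
    unfolding f_def using pin[of t] that rp by (intro kk_vderiv assms) auto
  have fc: "continuous_on {0..r} f"
    using fd by (intro continuous_at_imp_continuous_on ballI)
       (auto simp: has_vector_derivative_def dest!: has_derivative_continuous)
  have phd: "((\<lambda>s. s - fr L1 L2 s) has_real_derivative (BB L1 L2 s)) (at s)" if "s < L2" for s
    using fr_deriv[OF assms(2) that, of L1] by (auto intro!: derivative_eq_intros)
  have phc: "continuous_on {0..r} (\<lambda>s. s - fr L1 L2 s)"
  proof (intro continuous_at_imp_continuous_on ballI)
    fix x assume "x \<in> {0..r}"
    hence "x < L2" using rp assms(2) by simp
    thus "isCont (\<lambda>s. s - fr L1 L2 s) x" by (rule DERIV_isCont[OF phd])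
  qed
  have "cmod (f r - f 0) \<le> (r - fr L1 L2 r) - (0 - fr L1 L2 0)"
  proof (rule differentiable_bound_general[of 0 r f "\<lambda>s. s - fr L1 L2 s"])
    fix x :: real assume x: "0 < x" "x < r"
    show "(f has_vector_derivative
      (cnj u * G (0 + of_real x * u) + cnj (0 + of_real x * u) * (deriv G (0 + of_real x * u) * u)
        + (deriv H (0 + of_real x * u) - 1) * u)) (at x)" using fd x by simp
    show "((\<lambda>s. s - fr L1 L2 s) has_vector_derivative (BB L1 L2 x)) (at x)"
      using phd[of x] x rp assms(2) by (simp add: has_real_derivative_iff_has_vector_derivative)
    have "cmod (cnj u * G (0 + of_real x * u) + cnj (0 + of_real x * u) * (deriv G (0 + of_real x * u) * u)
        + (deriv H (0 + of_real x * u) - 1) * u) \<le> cmod u * BB L1 L2 (cmod (0 + of_real x * u))"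
      using pin[of x] x rp by (intro kk_dbound assms) auto
    thus "cmod (cnj u * G (0 + of_real x * u) + cnj (0 + of_real x * u) * (deriv G (0 + of_real x * u) * u)
        + (deriv H (0 + of_real x * u) - 1) * u) \<le> BB L1 L2 x" using un pin[of x] x by simp
  qed (use fc phc rp in auto)
  moreover have "f 0 = 0" unfolding f_def kk_def using assms by simp
  moreover have "f r = kk G H z" unfolding f_def using zu by simp
  ultimately show ?thesis unfolding r_def fr0 by simp
qed

lemma F_kk: "\<forall>z\<in>ball 0 1. F z = cnj z * G z + H z \<Longrightarrow> cmod z < 1 \<Longrightarrow> F z = z + kk G H z"
  unfolding kk_def by simp

lemma main_inj:
  assumes "L1 \<ge> 0" "L2 > 1" "G analytic_on ball 0 1" "H analytic_on ball 0 1"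
    and "G 0 = 0" "deriv H 0 = 1"
    and "\<forall>z\<in>ball 0 1. cmod (deriv G z) \<le> L1"
    and "\<forall>z\<in>ball 0 1. cmod (deriv H z) < L2"
    and FF: "\<forall>z\<in>ball 0 1. F z = cnj z * G z + H z"
  shows "inj_on F (ball 0 (rho1 L1 L2))"
proof (rule inj_onI, rule ccontr)
  fix z1 z2 assume z1: "z1 \<in> ball 0 (rho1 L1 L2)" and z2: "z2 \<in> ball 0 (rho1 L1 L2)"
    and eq: "F z1 = F z2" and ne: "z1 \<noteq> z2"
  note rp = rho1_props[OF assms(1,2)]
  define r where "r = max (cmod z1) (cmod z2)"
  have r0: "0 \<le> r" unfolding r_def by (simp add: le_max_iff_disj)
  have r: "0 \<le> r" "r < rho1 L1 L2" using z1 z2 r0 unfolding r_def by auto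
  have "qq L1 L2 r > 0" using qq_sign(1)[OF assms(1,2) r] .
  moreover have "L2 - r > 0" using r rp assms(2) by simp
  ultimately have "qq L1 L2 r / (L2 - r) > 0" by (rule divide_pos_pos)
  hence B1: "BB L1 L2 r < 1" using BB_qq[OF assms(2), of r L1] r rp assms(2) by simp
  have kb: "cmod (kk G H z2 - kk G H z1) \<le> cmod (z2 - z1) * BB L1 L2 r"
    using r rp r_def by (intro kk_seg_bound assms) auto
  have "F z2 - F z1 = (z2 - z1) + (kk G H z2 - kk G H z1)"
    using F_kk[OF FF, of z1] F_kk[OF FF, of z2] z1 z2 rp by simp
  hence "z2 - z1 = - (kk G H z2 - kk G H z1)" using eq by (simp add: algebra_simps)
  hence "cmod (z2 - z1) \<le> cmod (z2 - z1) * BB L1 L2 r" using kb by (metis norm_minus_cancel)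
  moreover have "cmod (z2 - z1) > 0" using ne by simp
  ultimately show False using B1 by (simp add: mult_less_cancel_left1)
qed

lemma F_lower:
  assumes "L1 \<ge> 0" "L2 > 1" "G analytic_on ball 0 1" "H analytic_on ball 0 1"
    and "G 0 = 0" "H 0 = 0" "deriv H 0 = 1"
    and "\<forall>z\<in>ball 0 1. cmod (deriv G z) \<le> L1"
    and "\<forall>z\<in>ball 0 1. cmod (deriv H z) < L2"
    and FF: "\<forall>z\<in>ball 0 1. F z = cnj z * G z + H z"
    and z: "cmod z < 1"
  shows "fr L1 L2 (cmod z) \<le> cmod (F z)"
proof -
  have "cmod (kk G H z) \<le> cmod z - fr L1 L2 (cmod z)" by (rule kk_radial_bound[OF assms(1-9) z])
  moreover have "F z = z + kk G H z" by (rule F_kk[OF FF z])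
  moreover have "cmod z - cmod (kk G H z) \<le> cmod (z + kk G H z)"
    by (metis norm_diff_ineq)
  ultimately show ?thesis by (simp only:)
qed

lemma main_cover:
  assumes "L1 \<ge> 0" "L2 > 1" "G analytic_on ball 0 1" "H analytic_on ball 0 1"
    and "G 0 = 0" "H 0 = 0" "deriv H 0 = 1"
    and "\<forall>z\<in>ball 0 1. cmod (deriv G z) \<le> L1"
    and "\<forall>z\<in>ball 0 1. cmod (deriv H z) < L2"
    and FF: "\<forall>z\<in>ball 0 1. F z = cnj z * G z + H z"
  shows "ball 0 (sigma1 L1 L2) \<subseteq> F ` ball 0 (rho1 L1 L2)"
proof (rule ccontr)
  assume "\<not> ?thesis"
  then obtain w where w: "w \<in> ball 0 (sigma1 L1 L2)" "w \<notin> F ` ball 0 (rho1 L1 L2)" by blast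
  note rp = rho1_props[OF assms(1,2)]
  define \<rho> where "\<rho> = rho1 L1 L2"
  define U where "U = F ` ball 0 \<rho>"
  have holG: "G holomorphic_on ball 0 1" using assms(3) by (simp add: analytic_imp_holomorphic)
  have holH: "H holomorphic_on ball 0 1" using assms(4) by (simp add: analytic_imp_holomorphic)
  have cF: "continuous_on (ball 0 1) F"
  proof -
    have "continuous_on (ball 0 1) (\<lambda>z. cnj z * G z + H z)"
      using holG holH by (intro continuous_intros holomorphic_on_imp_continuous_on)
    thus ?thesis by (rule continuous_on_cong[THEN iffD1, rotated 2]) (use FF in auto)
  qed
  have sub: "cball 0 \<rho> \<subseteq> ball 0 1" using rp \<rho>_def by auto
  have sub2: "ball 0 \<rho> \<subseteq> ball 0 1" using rp \<rho>_def by auto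
  have cb: "continuous_on (ball 0 \<rho>) F" by (rule continuous_on_subset[OF cF sub2])
  have "open U" unfolding U_def
    by (rule invariance_of_domain[OF cb]) (use main_inj[OF assms(1-5,7-10)] \<rho>_def in auto)
  have F0: "F 0 = 0" using FF assms by simp
  have "0 \<in> U" unfolding U_def using F0 rp \<rho>_def by (auto intro!: image_eqI[of _ _ 0])
  moreover have "0 \<in> ball 0 (sigma1 L1 L2)"
  proof -
    have "cmod w < sigma1 L1 L2" using w(1) by simp
    hence "0 < sigma1 L1 L2" using norm_ge_zero[of w] by linarith
    thus ?thesis by simp
  qed
  ultimately have i1: "ball 0 (sigma1 L1 L2) \<inter> U \<noteq> {}" by blast
  have i2: "ball 0 (sigma1 L1 L2) - U \<noteq> {}" using w U_def \<rho>_def by blast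
  obtain v where v: "v \<in> ball 0 (sigma1 L1 L2)" "v \<in> frontier U"
    using connected_Int_frontier[OF connected_ball i1 i2] by blast
  have "compact (F ` cball 0 \<rho>)"
    by (rule compact_continuous_image[OF continuous_on_subset[OF cF sub]]) simp
  hence "closed (F ` cball 0 \<rho>)" by (rule compact_imp_closed)
  moreover have "U \<subseteq> F ` cball 0 \<rho>" unfolding U_def by auto
  ultimately have "closure U \<subseteq> F ` cball 0 \<rho>" by (rule closure_minimal[rotated])
  moreover have "v \<in> closure U" "v \<notin> U" using v \<open>open U\<close> by (auto simp: frontier_def interior_open)
  ultimately obtain z where z: "z \<in> cball 0 \<rho>" "v = F z" "z \<notin> ball 0 \<rho>" unfolding U_def by blast
  have zn: "cmod z = \<rho>" using z by auto
  have "fr L1 L2 (cmod z) \<le> cmod (F z)" using zn rp \<rho>_def by (intro F_lower[OF assms]) auto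
  hence "sigma1 L1 L2 \<le> cmod v" using z zn \<rho>_def sigma1_fr by simp
  thus False using v by simp
qed



lemma fr_cont: "L2 > 1 \<Longrightarrow> continuous_on {0..1} (fr L1 L2)"
proof (intro continuous_at_imp_continuous_on ballI)
  fix x assume "L2 > 1" "x \<in> {0..(1::real)}"
  hence "x < L2" by simp
  thus "isCont (fr L1 L2) x" using fr_deriv[OF \<open>L2 > 1\<close>] by (blast intro: DERIV_isCont)
qed

lemma fr_noninj:
  assumes "L1 \<ge> 0" "L2 > 1" "rho1 L1 L2 < r" "r \<le> 1"
  shows "\<exists>a c. 0 \<le> a \<and> a < r \<and> 0 \<le> c \<and> c < r \<and> a \<noteq> c \<and> fr L1 L2 a = fr L1 L2 c"
proof -
  note rp = rho1_props[OF assms(1,2)]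
  define \<rho> where "\<rho> = rho1 L1 L2"
  define b where "b = (\<rho> + r)/2"
  define m where "m = \<rho>/2"
  have bb: "\<rho> < b" "b < r" using assms \<rho>_def b_def by auto
  have mm: "0 \<le> m" "m < \<rho>" using rp \<rho>_def m_def by auto
  have fb: "fr L1 L2 b < fr L1 L2 \<rho>" using bb assms \<rho>_def by (intro fr_decr) auto
  have fm: "fr L1 L2 m < fr L1 L2 \<rho>" using mm assms \<rho>_def by (intro fr_incr) auto
  have cont: "continuous_on {x..y} (fr L1 L2)" if "0 \<le> x" "y \<le> 1" for x y
    using fr_cont[OF assms(2)] by (rule continuous_on_subset) (use that in auto)
  show ?thesis
  proof (cases "fr L1 L2 m \<le> fr L1 L2 b")
    case True
    obtain x where x: "m \<le> x" "x \<le> \<rho>" "fr L1 L2 x = fr L1 L2 b"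
      using IVT'[of "fr L1 L2" m "fr L1 L2 b" \<rho>] True fb mm cont[of m \<rho>] rp \<rho>_def by auto
    show ?thesis using x bb mm by (intro exI[of _ x] exI[of _ b]) auto
  next
    case False
    obtain x where x: "\<rho> \<le> x" "x \<le> b" "fr L1 L2 x = fr L1 L2 m"
      using IVT2'[of "fr L1 L2" b "fr L1 L2 m" \<rho>] False fm bb mm cont[of \<rho> b] assms rp \<rho>_def by auto
    show ?thesis using x bb mm by (intro exI[of _ x] exI[of _ m]) auto
  qed
qed

lemma F1_noninj:
  assumes "L1 \<ge> 0" "L2 > 1" "rho1 L1 L2 < r" "r \<le> 1"
  shows "\<not> inj_on (F1 L1 L2) (ball 0 r)"
proof
  assume inj: "inj_on (F1 L1 L2) (ball 0 r)"
  obtain a c where ac: "0 \<le> a" "a < r" "0 \<le> c" "c < r" "a \<noteq> c" "fr L1 L2 a = fr L1 L2 c"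
    using fr_noninj[OF assms] by blast
  have "F1 L1 L2 (of_real a) = F1 L1 L2 (of_real c)"
    using ac assms by (simp add: F1_real)
  moreover have "of_real a \<in> ball (0::complex) r" "of_real c \<in> ball (0::complex) r" using ac by auto
  ultimately have "(of_real a :: complex) = of_real c" using inj by (meson inj_onD)
  thus False using ac by simp
qed

lemma F1_rho:
  assumes "L1 \<ge> 0" "L2 > 1"
  shows "cmod (F1 L1 L2 (of_real (rho1 L1 L2))) = sigma1 L1 L2"
proof -
  note rp = rho1_props[OF assms]
  have "fr L1 L2 0 < fr L1 L2 (rho1 L1 L2)" using rp assms by (intro fr_incr) auto
  hence "sigma1 L1 L2 > 0" using fr0 sigma1_fr by simp
  thus ?thesis using rp assms by (simp add: F1_real sigma1_fr)
qed

lemma notin_Rle0: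
  assumes "L2 > 1" "cmod z < 1"
  shows "1 - z / of_real L2 \<notin> \<real>\<^sub>\<le>\<^sub>0"
proof -
  have "\<bar>Re z\<bar> < 1" using abs_Re_le_cmod[of z] assms by linarith
  hence "Re z / L2 < 1" using assms by (simp add: divide_less_eq)
  hence "Re (1 - z / of_real L2) > 0" by simp
  thus ?thesis by (auto simp: complex_nonpos_Reals_iff)
qed

lemma H1_deriv:
  assumes "L2 > 1" "cmod z < 1"
  shows "((\<lambda>z. of_real (L2\<^sup>2) * z + of_real (L2 ^ 3 - L2) * Ln (1 - z / of_real L2)) has_field_derivative
     (of_real (L2\<^sup>2) + of_real (L2 ^ 3 - L2) * (inverse (1 - z / of_real L2) * (- (1 / of_real L2))))) (at z)"
proof -
  have "((\<lambda>z. Ln (1 - z / of_real L2)) has_field_derivative (inverse (1 - z / of_real L2) * (- (1 / of_real L2)))) (at z)"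
    by (rule DERIV_chain2[where f=Ln and g="\<lambda>z. 1 - z / of_real L2", OF has_field_derivative_Ln[OF notin_Rle0[OF assms]]])
       (use assms in \<open>auto intro!: derivative_eq_intros\<close>)
  from DERIV_cmult[OF this, of "of_real (L2 ^ 3 - L2)"]
  have d2: "((\<lambda>z. of_real (L2 ^ 3 - L2) * Ln (1 - z / of_real L2)) has_field_derivative
     (of_real (L2 ^ 3 - L2) * (inverse (1 - z / of_real L2) * (- (1 / of_real L2))))) (at z)" .
  have d1: "((\<lambda>z. of_real (L2\<^sup>2) * z) has_field_derivative of_real (L2\<^sup>2)) (at z)"
    by (auto intro!: derivative_eq_intros)
  show ?thesis by (rule DERIV_add[OF d1 d2])
qed

lemma D_simp:
  assumes "L2 > 1" "cmod z < 1"
  shows "(of_real (L2\<^sup>2) + of_real (L2 ^ 3 - L2) * (inverse (1 - z / of_real L2) * (- (1 / of_real L2))) :: complex)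
     = of_real L2 * (1 - of_real L2 * z) / (of_real L2 - z)"
proof -
  have "z \<noteq> of_real L2" using assms by auto
  hence nz: "of_real L2 - z \<noteq> 0" by simp
  have nz2: "(of_real L2 :: complex) \<noteq> 0" using assms by simp
  have "1 - z / of_real L2 = (of_real L2 - z) / of_real L2" using nz2 by (simp add: field_simps)
  thus ?thesis using nz nz2 by (simp add: field_simps power2_eq_square power3_eq_cube)
qed

lemma D_norm:
  assumes "L2 > 1" "cmod z < 1"
  shows "cmod (of_real L2 * (1 - of_real L2 * z) / (of_real L2 - z)) < L2"
proof -
  define x where "x = Re z"
  define y where "y = Im z"
  have n1: "(cmod (1 - of_real L2 * z))\<^sup>2 = (1 - L2*x)\<^sup>2 + (L2*y)\<^sup>2" unfolding x_def y_def by (simp add: cmod_power2)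
  have n2: "(cmod (of_real L2 - z))\<^sup>2 = (L2 - x)\<^sup>2 + y\<^sup>2" unfolding x_def y_def by (simp add: cmod_power2)
  have "(cmod z)\<^sup>2 < 1" using assms by (simp add: power_less_one_iff)
  hence xy: "x\<^sup>2 + y\<^sup>2 < 1" unfolding x_def y_def by (simp add: cmod_power2)
  have "L2\<^sup>2 > 1" using assms by (simp add: one_less_power)
  hence pp: "(L2\<^sup>2 - 1) * (1 - (x\<^sup>2 + y\<^sup>2)) > 0" using xy by simp
  have id: "((L2 - x)\<^sup>2 + y\<^sup>2) - ((1 - L2*x)\<^sup>2 + (L2*y)\<^sup>2) = (L2\<^sup>2 - 1) * (1 - (x\<^sup>2 + y\<^sup>2))"
    by (simp add: power2_eq_square algebra_simps)
  have "(cmod (1 - of_real L2 * z))\<^sup>2 < (cmod (of_real L2 - z))\<^sup>2"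
    unfolding n1 n2 using id pp by linarith
  hence lt: "cmod (1 - of_real L2 * z) < cmod (of_real L2 - z)" by (rule power_less_imp_less_base) simp
  have "z \<noteq> of_real L2" using assms by auto
  hence pos: "cmod (of_real L2 - z) > 0" by simp
  have "cmod (of_real L2 * (1 - of_real L2 * z) / (of_real L2 - z)) = L2 * (cmod (1 - of_real L2 * z) / cmod (of_real L2 - z))"
    using assms by (simp add: norm_divide norm_mult)
  also have "\<dots> < L2 * 1" using lt pos assms by (intro mult_strict_left_mono) (auto simp: divide_less_eq)
  finally show ?thesis by simp
qed


theorem theorem2p1:
  fixes L1 L2 :: real and G H F :: "complex \<Rightarrow> complex"
  assumes "L1 \<ge> 0" and "L2 > 1"
    and "G analytic_on ball 0 1" and "H analytic_on ball 0 1"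
    and "G 0 = 0" and "H 0 = 0" and "deriv H 0 = 1"
    and "\<forall>z\<in>ball 0 1. cmod (deriv G z) \<le> L1"
    and "\<forall>z\<in>ball 0 1. cmod (deriv H z) < L2"
    and "\<forall>z\<in>ball 0 1. F z = cnj z * G z + H z"
  shows "inj_on F (ball 0 (rho1 L1 L2))
       \<and> ball 0 (sigma1 L1 L2) \<subseteq> F ` ball 0 (rho1 L1 L2)
       \<and> (let G1 = (\<lambda>z. - of_real L1 * z);
              H1 = (\<lambda>z. of_real (L2\<^sup>2) * z + of_real (L2 ^ 3 - L2) * Ln (1 - z / of_real L2))
          in G1 analytic_on ball 0 1 \<and> H1 analytic_on ball 0 1
             \<and> G1 0 = 0 \<and> H1 0 = 0 \<and> deriv H1 0 = 1
             \<and> (\<forall>z\<in>ball 0 1. cmod (deriv G1 z) \<le> L1)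
             \<and> (\<forall>z\<in>ball 0 1. cmod (deriv H1 z) < L2)
             \<and> (\<forall>z\<in>ball 0 1. F1 L1 L2 z = cnj z * G1 z + H1 z))
       \<and> (\<forall>r. rho1 L1 L2 < r \<and> r \<le> 1 \<longrightarrow> \<not> inj_on (F1 L1 L2) (ball 0 r))
       \<and> cmod (F1 L1 L2 (of_real (rho1 L1 L2))) = sigma1 L1 L2"
proof -
  note rp = rho1_props[OF assms(1,2)]
  have P1: "inj_on F (ball 0 (rho1 L1 L2))" by (rule main_inj[OF assms(1-5,7-10)])
  have P2: "ball 0 (sigma1 L1 L2) \<subseteq> F ` ball 0 (rho1 L1 L2)" by (rule main_cover[OF assms])
  define G1 where "G1 = (\<lambda>z::complex. - of_real L1 * z)"
  define H1 where "H1 = (\<lambda>z. of_real (L2\<^sup>2) * z + of_real (L2 ^ 3 - L2) * Ln (1 - z / of_real L2))"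
  have a1: "G1 analytic_on ball 0 1" unfolding G1_def
    by (simp add: analytic_on_open holomorphic_intros)
  have "H1 holomorphic_on ball 0 1" unfolding H1_def
    using notin_Rle0[OF assms(2)] by (auto intro!: holomorphic_intros)
  hence a2: "H1 analytic_on ball 0 1" by (simp add: analytic_on_open)
  have a3: "G1 0 = 0" "H1 0 = 0" unfolding G1_def H1_def by simp_all
  have dH1: "deriv H1 z = of_real L2 * (1 - of_real L2 * z) / (of_real L2 - z)" if "cmod z < 1" for z
    unfolding H1_def using DERIV_imp_deriv[OF H1_deriv[OF assms(2) that]] D_simp[OF assms(2) that] by simp
  have a4: "deriv H1 0 = 1" using dH1[of 0] assms(2) by simp
  have a5: "\<forall>z\<in>ball 0 1. cmod (deriv G1 z) \<le> L1"
  proof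
    fix z :: complex
    have "(G1 has_field_derivative (- of_real L1)) (at z)" unfolding G1_def
      by (auto intro!: derivative_eq_intros)
    hence "deriv G1 z = - of_real L1" by (rule DERIV_imp_deriv)
    thus "cmod (deriv G1 z) \<le> L1" using assms(1) by simp
  qed
  have a6: "\<forall>z\<in>ball 0 1. cmod (deriv H1 z) < L2"
    using dH1 D_norm[OF assms(2)] by simp
  have a7: "\<forall>z\<in>ball 0 1. F1 L1 L2 z = cnj z * G1 z + H1 z"
  proof
    fix z :: complex
    have "of_real ((cmod z)\<^sup>2) = z * cnj z" by (rule complex_norm_square)
    thus "F1 L1 L2 z = cnj z * G1 z + H1 z" unfolding F1_def G1_def H1_def
      by (simp add: algebra_simps)
  qed
  have P3: "let G1 = (\<lambda>z. - of_real L1 * z);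
              H1 = (\<lambda>z. of_real (L2\<^sup>2) * z + of_real (L2 ^ 3 - L2) * Ln (1 - z / of_real L2))
          in G1 analytic_on ball 0 1 \<and> H1 analytic_on ball 0 1
             \<and> G1 0 = 0 \<and> H1 0 = 0 \<and> deriv H1 0 = 1
             \<and> (\<forall>z\<in>ball 0 1. cmod (deriv G1 z) \<le> L1)
             \<and> (\<forall>z\<in>ball 0 1. cmod (deriv H1 z) < L2)
             \<and> (\<forall>z\<in>ball 0 1. F1 L1 L2 z = cnj z * G1 z + H1 z)"
    unfolding Let_def G1_def[symmetric] H1_def[symmetric] using a1 a2 a3 a4 a5 a6 a7 by blast
  have P4: "\<forall>r. rho1 L1 L2 < r \<and> r \<le> 1 \<longrightarrow> \<not> inj_on (F1 L1 L2) (ball 0 r)"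
    using F1_noninj[OF assms(1,2)] by blast
  have P5: "cmod (F1 L1 L2 (of_real (rho1 L1 L2))) = sigma1 L1 L2" by (rule F1_rho[OF assms(1,2)])
  show ?thesis using P1 P2 P3 P4 P5 by blast
qed

end
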